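(* Let $d \ge 1$, let $\mathcal{V}^s$ be a finite nonempty set (the source vocabulary) with embeddings $e_k^s \in \mathbb{R}^d$ for $k \in \mathcal{V}^s$, and let $\mathcal{V}^t$ be a finite set disjoint from $\mathcal{V}^s$ (the added target vocabulary) with embeddings $e_k^t \in \mathbb{R}^d$ for $k \in \mathcal{V}^t$. Suppose that $$\sup_{k \in \mathcal{V}^t} h^{\top} e_k^t \;\le\; \sup_{k \in \mathcal{V}^s} h^{\top} e_k^s \qquad \text{for all } h \in \mathbb{R}^d.$$ Then $\{e_k^t : k \in \mathcal{V}^t\}$ is a good initialization, i.e. for every prefix representation $h \in H$, the greedily decoded next word of the expanded model equals that of the source model: $\operatorname{argmax}_{j \in \mathcal{V}^s} p^s(j \mid h) = \operatorname{argmax}_{j \in \mathcal{V}^s \cup \mathcal{V}^t} p^t(j \mid h)$.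
   Context: Setting: a language model maps a prefix (sequence of words) to a representation $h \in \mathbb{R}^d$ via a fixed map $\phi$ whose parameters are unchanged by vocabulary expansion. Let $H \subseteq \mathbb{R}^d$ be the set of representations $h = \phi(w_1,\dots,w_{i-1})$ of prefixes all of whose words lie in $\mathcal{V}^s$. The source model's next-word distribution is $p^s(j \mid h) = \exp(h^\top e_j^s)/\sum_{k \in \mathcal{V}^s}\exp(h^\top e_k^s)$ for $j \in \mathcal{V}^s$; the expanded model's is $p^t(j \mid h) = \exp(h^\top e_j)/\sum_{k \in \mathcal{V}^s \cup \mathcal{V}^t}\exp(h^\top e_k)$ for $j \in \mathcal{V}^s\cup\mathcal{V}^t$, where $e_j = e_j^s$ for $j \in \mathcal{V}^s$ and $e_j = e_j^t$ for $j \in \mathcal{V}^t$. Greedy decoding outputs the argmax. Tie-breaking convention: argmax uses a fixed ordering of $\mathcal{V}^s$ (the same in both models), and in the expanded model every word of $\mathcal{V}^s$ precedes every word of $\mathcal{V}^t$, ties being broken in favor of the earliest word. An initialization $\{e_k^t\}$ is called good if the two greedy outputs coincide for every $h \in H$. *)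

theory Defs
  imports "HOL-Analysis.Analysis"
begin

definition softmax_prob :: "'w set \<Rightarrow> ('w \<Rightarrow> real^'d) \<Rightarrow> real^'d \<Rightarrow> 'w \<Rightarrow> real" where
  "softmax_prob V e h j = exp (h \<bullet> e j) / (\<Sum>k\<in>V. exp (h \<bullet> e k))"

definition p_src :: "'w set \<Rightarrow> ('w \<Rightarrow> real^'d) \<Rightarrow> real^'d \<Rightarrow> 'w \<Rightarrow> real" where
  "p_src Vs es h j = softmax_prob Vs es h j"

definition comb_emb :: "'w set \<Rightarrow> ('w \<Rightarrow> real^'d) \<Rightarrow> ('w \<Rightarrow> real^'d) \<Rightarrow> 'w \<Rightarrow> real^'d" where
  "comb_emb Vs es et j = (if j \<in> Vs then es j else et j)"

definition p_tgt :: "'w set \<Rightarrow> 'w set \<Rightarrow> ('w \<Rightarrow> real^'d) \<Rightarrow> ('w \<Rightarrow> real^'d) \<Rightarrow> real^'d \<Rightarrow> 'w \<Rightarrow> real" where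
  "p_tgt Vs Vt es et h j = softmax_prob (Vs \<union> Vt) (comb_emb Vs es et) h j"

text \<open>Greedy decoding: the argmax of f over the words of the list xs (the list
  gives the fixed ordering of the vocabulary); ties are broken in favour of the
  earliest word of the list.\<close>
definition greedy :: "'w list \<Rightarrow> ('w \<Rightarrow> real) \<Rightarrow> 'w" where
  "greedy xs f = xs ! (LEAST i. i < length xs \<and> (\<forall>j<length xs. f (xs ! j) \<le> f (xs ! i)))"

definition prefix_reps :: "('w list \<Rightarrow> real^'d) \<Rightarrow> 'w set \<Rightarrow> (real^'d) set" where
  "prefix_reps \<phi> Vs = {\<phi> ws | ws. set ws \<subseteq> Vs}"

end

theory Submission
  imports Defs
begin

lemma greedy_cong:
  assumes "\<forall>a\<in>set xs. \<forall>b\<in>set xs. (f a \<le> f b) = (g a \<le> g b)"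
  shows "greedy xs f = greedy xs g"
proof -
  have "(\<lambda>i. i < length xs \<and> (\<forall>j<length xs. f (xs ! j) \<le> f (xs ! i)))
      = (\<lambda>i. i < length xs \<and> (\<forall>j<length xs. g (xs ! j) \<le> g (xs ! i)))"
    using assms by (auto intro!: ext simp: nth_mem)
  then show ?thesis unfolding greedy_def by simp
qed

lemma softmax_order:
  assumes "finite V" "V \<noteq> {}"
  shows "(softmax_prob V e h a \<le> softmax_prob V e h b) = (h \<bullet> e a \<le> h \<bullet> e b)"
proof -
  have "(\<Sum>k\<in>V. exp (h \<bullet> e k)) > 0" using assms by (intro sum_pos) auto
  then show ?thesis unfolding softmax_prob_def by (simp add: divide_le_cancel)
qed

lemma greedy_max:
  fixes s :: "'w \<Rightarrow> real"
  assumes i0: "i0 < length ls" "s (ls ! i0) = M" "\<forall>i<i0. s (ls ! i) < M"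
    and bnd: "\<forall>j<length xs. s (xs ! j) \<le> M"
    and pre: "\<forall>i\<le>i0. xs ! i = ls ! i" "i0 < length xs"
  shows "greedy xs s = ls ! i0"
proof -
  let ?P = "\<lambda>i. i < length xs \<and> (\<forall>j<length xs. s (xs ! j) \<le> s (xs ! i))"
  have p0: "?P i0" using i0 bnd pre by auto
  have np: "\<not> ?P i" if "i < i0" for i
  proof
    assume "?P i"
    then have "s (xs ! i0) \<le> s (xs ! i)" using pre by auto
    moreover have "xs ! i0 = ls ! i0" "xs ! i = ls ! i" using pre that by auto
    moreover have "s (ls ! i) < M" using i0(3) that by blast
    ultimately show False using i0(2) by simp
  qed
  have "(LEAST i. ?P i) = i0"
  proof (rule Least_equality)
    show "?P i0" by (rule p0)
    show "i0 \<le> y" if "?P y" for y using np[of y] that by (meson not_le)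
  qed
  then show ?thesis unfolding greedy_def using pre by simp
qed

theorem theorem1:
  fixes Vs Vt :: "'w set"
    and es et :: "'w \<Rightarrow> real^'d"
    and \<phi> :: "'w list \<Rightarrow> real^'d"
    and ls lt :: "'w list"
  assumes "finite Vs" and "Vs \<noteq> {}" and "finite Vt" and "Vs \<inter> Vt = {}"
    and "distinct ls" and "set ls = Vs"
    and "distinct lt" and "set lt = Vt"
    and "\<forall>h::real^'d. \<forall>k\<in>Vt. h \<bullet> et k \<le> Max ((\<lambda>k. h \<bullet> es k) ` Vs)"
  shows "\<forall>h\<in>prefix_reps \<phi> Vs.
           greedy ls (p_src Vs es h) = greedy (ls @ lt) (p_tgt Vs Vt es et h)"
proof
  fix h assume "h \<in> prefix_reps \<phi> Vs"
  define s where "s = (\<lambda>j. h \<bullet> comb_emb Vs es et j)"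
  define M where "M = Max ((\<lambda>k. h \<bullet> es k) ` Vs)"
  have g1: "greedy ls (p_src Vs es h) = greedy ls s"
    apply (rule greedy_cong)
    using assms(1,2,6) by (simp add: p_src_def softmax_order s_def comb_emb_def)
  have g2: "greedy (ls @ lt) (p_tgt Vs Vt es et h) = greedy (ls @ lt) s"
    apply (rule greedy_cong)
    using assms(1,2,3) by (simp add: p_tgt_def softmax_order s_def)
  have sbound: "s j \<le> M" if "j \<in> Vs \<union> Vt" for j
  proof (cases "j \<in> Vs")
    case True
    then have "s j = h \<bullet> es j" unfolding s_def comb_emb_def by simp
    moreover have "h \<bullet> es j \<le> M" unfolding M_def by (rule Max_ge) (use assms(1) True in auto)
    ultimately show ?thesis by simp
  next
    case False
    then have "s j = h \<bullet> et j" "j \<in> Vt" using that unfolding s_def comb_emb_def by auto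
    moreover have "h \<bullet> et j \<le> M" using assms(9) \<open>j \<in> Vt\<close> unfolding M_def by blast
    ultimately show ?thesis by simp
  qed
  have "M \<in> (\<lambda>k. h \<bullet> es k) ` Vs" unfolding M_def by (rule Max_in) (use assms(1,2) in auto)
  then obtain k where k0: "k \<in> Vs" "M = h \<bullet> es k" by blast
  then have k: "s k = M" unfolding s_def comb_emb_def by simp
  have "k \<in> set ls" using k0(1) assms(6) by simp
  then obtain i where i1: "i < length ls" "ls ! i = k" unfolding in_set_conv_nth by blast
  have i: "i < length ls" "s (ls ! i) = M" using i1 k by simp_all
  define i0 where "i0 = (LEAST i. i < length ls \<and> s (ls ! i) = M)"
  have i0: "i0 < length ls \<and> s (ls ! i0) = M" unfolding i0_def by (rule LeastI[of _ i]) (use i in simp)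
  have i0l: "\<forall>i<i0. s (ls ! i) < M"
  proof (intro allI impI)
    fix j assume "j < i0"
    then have "\<not> (j < length ls \<and> s (ls ! j) = M)" unfolding i0_def by (rule not_less_Least)
    moreover have "j < length ls" using \<open>j < i0\<close> i0 by simp
    moreover have "ls ! j \<in> Vs" using assms(6) nth_mem \<open>j < length ls\<close> by blast
    moreover have "s (ls ! j) \<le> M" using sbound calculation(3) by blast
    ultimately show "s (ls ! j) < M" by simp
  qed
  have bt: "\<forall>j<length (ls @ lt). s ((ls @ lt) ! j) \<le> M"
  proof (intro allI impI)
    fix j assume "j < length (ls @ lt)"
    then have "(ls @ lt) ! j \<in> set (ls @ lt)" by (rule nth_mem)
    then have "(ls @ lt) ! j \<in> Vs \<union> Vt" using assms(6,8) by simp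
    then show "s ((ls @ lt) ! j) \<le> M" by (rule sbound)
  qed
  have bl: "\<forall>j<length ls. s (ls ! j) \<le> M"
  proof (intro allI impI)
    fix j assume "j < length ls"
    then have "ls ! j \<in> set ls" by (rule nth_mem)
    then have "ls ! j \<in> Vs \<union> Vt" using assms(6) by simp
    then show "s (ls ! j) \<le> M" by (rule sbound)
  qed
  have pre: "\<forall>i\<le>i0. (ls @ lt) ! i = ls ! i"
  proof (intro allI impI)
    fix i assume "i \<le> i0"
    then have "i < length ls" using i0 by simp
    then show "(ls @ lt) ! i = ls ! i" by (rule nth_append_left)
  qed
  have "greedy ls s = ls ! i0"
    by (rule greedy_max[where M=M, OF conjunct1[OF i0] conjunct2[OF i0] i0l bl]) (use i0 in simp_all)
  moreover have "greedy (ls @ lt) s = ls ! i0"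
    by (rule greedy_max[where M=M, OF conjunct1[OF i0] conjunct2[OF i0] i0l bt pre]) (use i0 in simp)
  ultimately show "greedy ls (p_src Vs es h) = greedy (ls @ lt) (p_tgt Vs Vt es et h)"
    using g1 g2 by simp
qed

end
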